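(* In a hidden Markov model with multiple observation processes and a fixed policy $g$, the law $\mu_t$ of the information state $Z_t$ satisfies \[\mu_{t+1}=\sum_{i\in O}\sum_{y\in V}\int_{A_i}\big(z\cdot T\cdot M^{(i)}\big)_y\,\delta\big(r_{i,y}(z)\big)\,d\mu_t(z),\] where $\delta(\cdot)$ denotes the Dirac measure on $\mathcal P(S)$ and $z\in\mathcal P(S)\subset\mathbb R^n$ is treated as a row vector.
   Context: $(X_t)$ is a time-homogeneous Markov chain on $S=\{1,\dots,n\}$ with transition matrix $T$. $O$ is a finite index set; for $i\in O$, $(Y^{(i)}_t)$ is an observation process with values in $V=\{1,\dots,m\}$ and observation matrix $M^{(i)}$ ($n\times m$), $M^{(i)}_{jk}=\mathbb P(Y^{(i)}_t=k\mid X_t=j)$; observations depend only on the current state and do not affect future states (conditional independence as in a hidden Markov model). $\mathcal P(S)$ is the probability simplex in $\mathbb R^n$, $\delta(x)$ the point mass at $x\in S$. A (measurable) policy is a function $g:\mathcal P(S)\to O$, $A_i=g^{-1}\{i\}$; $I_0$ is fixed, $I_{t+1}=g(Z_t)$, $Y_t=Y^{(I_t)}_t$, and $Z_t=\mathbb P(X_t\mid Y_0,\dots,Y_t,I_0,\dots,I_t)\in\mathcal P(S)$ is the information state, with law $\mu_t$ (a probability measure on $\mathcal P(S)$). For $i\in O$, $y\in V$, $r_{i,y}(z)=\frac{\sum_{x,j}M^{(i)}_{x,y}T_{j,x}z_j\delta(x)}{\sum_{x,j}M^{(i)}_{x,y}T_{j,x}z_j}$ (terms in which the coefficient $(zTM^{(i)})_y$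 vanishes contribute zero). *)

theory Defs
  imports "HOL-Probability.Probability"
begin

text \<open>States S = the finite type 'n, observation values V = the finite type 'm,
  index set O = the finite type 'o. Distributions on S are row vectors in real^'n.\<close>

definition PS :: "(real^'n::finite) set" where
  "PS = {z. (\<forall>j. 0 \<le> z$j) \<and> (\<Sum>j\<in>UNIV. z$j) = 1}"

text \<open>r_{i,y}(z); division by zero gives 0, so terms with vanishing coefficient vanish.\<close>
definition rmap :: "real^'n^'n \<Rightarrow> ('o \<Rightarrow> real^'m^'n) \<Rightarrow> 'o \<Rightarrow> 'm \<Rightarrow> real^'n \<Rightarrow> real^'n"
  where "rmap T Mo i y z =
    (1 / (\<Sum>x\<in>UNIV. \<Sum>j\<in>UNIV. Mo i $ x $ y * T $ j $ x * z $ j)) *\<^sub>R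
    (\<Sum>x\<in>UNIV. \<Sum>j\<in>UNIV. (Mo i $ x $ y * T $ j $ x * z $ j) *\<^sub>R axis x 1)"

definition condZ :: "'a measure \<Rightarrow> (nat \<Rightarrow> 'a \<Rightarrow> 'n::finite) \<Rightarrow> ('a \<Rightarrow> 'h) \<Rightarrow> nat \<Rightarrow> 'a \<Rightarrow> real^'n"
  where "condZ P X H t \<omega> =
    (\<chi> x. measure P {\<omega>'\<in>space P. X t \<omega>' = x \<and> H \<omega>' = H \<omega>} /
          measure P {\<omega>'\<in>space P. H \<omega>' = H \<omega>})"

primrec hist :: "'a measure \<Rightarrow> (nat \<Rightarrow> 'a \<Rightarrow> 'n::finite) \<Rightarrow> ('o \<Rightarrow> nat \<Rightarrow> 'a \<Rightarrow> 'm)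
    \<Rightarrow> (real^'n \<Rightarrow> 'o) \<Rightarrow> 'o \<Rightarrow> nat \<Rightarrow> 'a \<Rightarrow> ('o \<times> 'm) list" where
  "hist P X Y g i0 0 = (\<lambda>\<omega>. [(i0, Y i0 0 \<omega>)])"
| "hist P X Y g i0 (Suc t) =
     (let H = hist P X Y g i0 t;
          I = (\<lambda>\<omega>. g (condZ P X H t \<omega>))
      in (\<lambda>\<omega>. H \<omega> @ [(I \<omega>, Y (I \<omega>) (Suc t) \<omega>)]))"

definition infoZ :: "'a measure \<Rightarrow> (nat \<Rightarrow> 'a \<Rightarrow> 'n::finite) \<Rightarrow> ('o \<Rightarrow> nat \<Rightarrow> 'a \<Rightarrow> 'm)
    \<Rightarrow> (real^'n \<Rightarrow> 'o) \<Rightarrow> 'o \<Rightarrow> nat \<Rightarrow> 'a \<Rightarrow> real^'n" where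
  "infoZ P X Y g i0 t = condZ P X (hist P X Y g i0 t) t"

definition infolaw :: "'a measure \<Rightarrow> (nat \<Rightarrow> 'a \<Rightarrow> 'n::finite) \<Rightarrow> ('o \<Rightarrow> nat \<Rightarrow> 'a \<Rightarrow> 'm)
    \<Rightarrow> (real^'n \<Rightarrow> 'o) \<Rightarrow> 'o \<Rightarrow> nat \<Rightarrow> (real^'n) measure" where
  "infolaw P X Y g i0 t = distr P borel (infoZ P X Y g i0 t)"

end

theory Submission
  imports Defs
begin

lemma all_le_Suc_split: "(\<forall>s\<le>Suc (u::nat). Q s) \<longleftrightarrow> (\<forall>s<u. Q s) \<and> Q u \<and> Q (Suc u)"
  by (auto simp: le_Suc_eq le_less less_Suc_eq)
lemma all_le_split: "(\<forall>s\<le>(u::nat). Q s) \<longleftrightarrow> (\<forall>s<u. Q s) \<and> Q u"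
proof
  assume "\<forall>s\<le>u. Q s" thus "(\<forall>s<u. Q s) \<and> Q u" by auto
next
  assume a: "(\<forall>s<u. Q s) \<and> Q u"
  show "\<forall>s\<le>u. Q s"
  proof (intro allI impI)
    fix s assume "s \<le> u" then show "Q s" using a by (cases "s = u") auto
  qed
qed

locale hmm =
  fixes P :: "'a measure"
    and X :: "nat \<Rightarrow> 'a \<Rightarrow> 'n::finite"
    and Y :: "'o::finite \<Rightarrow> nat \<Rightarrow> 'a \<Rightarrow> 'm::finite"
    and T :: "real^'n^'n"
    and Mo :: "'o \<Rightarrow> real^'m^'n"
    and p0 :: "'n \<Rightarrow> real"
    and g :: "real^'n \<Rightarrow> 'o"
    and i0 :: 'o
  assumes ps: "prob_space P"
    and Xm[measurable]: "\<And>s. X s \<in> P \<rightarrow>\<^sub>M count_space UNIV"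
    and Ym[measurable]: "\<And>i s. Y i s \<in> P \<rightarrow>\<^sub>M count_space UNIV"
    and joint: "\<And>u (xs :: nat \<Rightarrow> 'n) (is :: nat \<Rightarrow> 'o) (ys :: nat \<Rightarrow> 'm).
           measure P {\<omega>\<in>space P. \<forall>s\<le>u. X s \<omega> = xs s \<and> Y (is s) s \<omega> = ys s}
         = p0 (xs 0) * (\<Prod>s\<in>{1..u}. T $ xs (s - 1) $ xs s)
             * (\<Prod>s\<in>{0..u}. Mo (is s) $ xs s $ ys s)"
begin

sublocale prob_space P by (rule ps)

abbreviation "H \<equiv> hist P X Y g i0"

definition cz :: "nat \<Rightarrow> ('o \<times> 'm) list \<Rightarrow> real^'n" where
  "cz t h = (\<chi> x. measure P {\<omega>\<in>space P. X t \<omega> = x \<and> H t \<omega> = h} /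
          measure P {\<omega>\<in>space P. H t \<omega> = h})"

lemma condZ_eq: "condZ P X (H t) t \<omega> = cz t (H t \<omega>)"
  by (simp add: condZ_def cz_def)

lemma infoZ_eq: "infoZ P X Y g i0 t = (\<lambda>\<omega>. cz t (H t \<omega>))"
  by (simp add: infoZ_def condZ_eq fun_eq_iff)

lemma hist_Suc: "H (Suc t) \<omega> = H t \<omega> @ [(g (cz t (H t \<omega>)), Y (g (cz t (H t \<omega>))) (Suc t) \<omega>)]"
  by (simp add: Let_def condZ_eq)

lemma hist_len: "length (H t \<omega>) = Suc t"
  by (induction t) (simp, simp add: hist_Suc del: hist.simps)

lemma hist_nth: "s \<le> t \<Longrightarrow> snd (H t \<omega> ! s) = Y (fst (H t \<omega> ! s)) s \<omega>"
proof (induction t arbitrary: s)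
  case 0 then show ?case by simp
next
  case (Suc t)
  show ?case
  proof (cases "s \<le> t")
    case True
    then have "H (Suc t) \<omega> ! s = H t \<omega> ! s"
      by (simp add: hist_Suc nth_append hist_len del: hist.simps)
    then show ?thesis using Suc True by simp
  next
    case False
    then have "s = Suc t" using Suc by simp
    then show ?thesis by (simp add: hist_Suc nth_append hist_len del: hist.simps)
  qed
qed

lemma hist_det: "(\<forall>s\<le>t. Y (fst (H t \<omega>0 ! s)) s \<omega> = snd (H t \<omega>0 ! s)) \<Longrightarrow> H t \<omega> = H t \<omega>0"
proof (induction t)
  case 0
  then show ?case by simp
next
  case (Suc t)
  have A: "H (Suc t) \<omega>0 ! s = H t \<omega>0 ! s" if "s \<le> t" for s
    using that by (simp add: hist_Suc nth_append hist_len del: hist.simps)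
  have "\<forall>s\<le>t. Y (fst (H t \<omega>0 ! s)) s \<omega> = snd (H t \<omega>0 ! s)"
  proof (intro allI impI)
    fix s assume s: "s \<le> t"
    then show "Y (fst (H t \<omega>0 ! s)) s \<omega> = snd (H t \<omega>0 ! s)"
      using Suc.prems A[OF s] s by (metis le_SucI)
  qed
  then have E: "H t \<omega> = H t \<omega>0" by (rule Suc.IH)
  have "Y (fst (H (Suc t) \<omega>0 ! Suc t)) (Suc t) \<omega> = snd (H (Suc t) \<omega>0 ! Suc t)"
    using Suc.prems by (auto simp del: hist.simps)
  then have "Y (g (cz t (H t \<omega>0))) (Suc t) \<omega> = Y (g (cz t (H t \<omega>0))) (Suc t) \<omega>0"
    by (simp add: hist_Suc nth_append hist_len del: hist.simps)
  then show ?case using E by (simp add: hist_Suc del: hist.simps)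
qed

lemma Ev_eq: "{\<omega>\<in>space P. H t \<omega> = H t \<omega>0} = {\<omega>\<in>space P. \<forall>s\<le>t. Y (fst (H t \<omega>0 ! s)) s \<omega> = snd (H t \<omega>0 ! s)}"
proof safe
  fix \<omega> s assume "H t \<omega> = H t \<omega>0" "s \<le> t"
  then show "Y (fst (H t \<omega>0 ! s)) s \<omega> = snd (H t \<omega>0 ! s)"
    using hist_nth[of s t \<omega>] by simp
next
  fix \<omega> assume "\<forall>s\<le>t. Y (fst (H t \<omega>0 ! s)) s \<omega> = snd (H t \<omega>0 ! s)"
  then show "H t \<omega> = H t \<omega>0" by (rule hist_det)
qed

lemma Ev_sets: "{\<omega>\<in>space P. H t \<omega> = h} \<in> sets P"
proof (cases "\<exists>\<omega>0. h = H t \<omega>0")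
  case True
  then obtain \<omega>0 where "h = H t \<omega>0" by blast
  then show ?thesis using Ev_eq[of t \<omega>0] by simp
next
  case False
  then have "{\<omega>\<in>space P. H t \<omega> = h} = {}" by auto
  then show ?thesis by (metis sets.empty_sets)
qed

lemma Hm[measurable]: "H t \<in> P \<rightarrow>\<^sub>M count_space UNIV"
proof (subst measurable_count_space_eq2_countable, safe)
  fix a
  have "H t -` {a} \<inter> space P = {\<omega>\<in>space P. H t \<omega> = a}" by auto
  then show "H t -` {a} \<inter> space P \<in> sets P" using Ev_sets by simp
qed simp

lemma Zm[measurable]: "(\<lambda>\<omega>. cz t (H t \<omega>)) \<in> borel_measurable P"
  by (rule measurable_compose[OF Hm]) simp

definition "Hset t = H t ` space P"

lemma Hset_finite: "finite (Hset t)"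
proof (rule finite_subset)
  show "Hset t \<subseteq> {xs. set xs \<subseteq> UNIV \<and> length xs = Suc t}"
    by (auto simp: Hset_def hist_len)
  show "finite {xs. set xs \<subseteq> (UNIV::('o\<times>'m) set) \<and> length xs = Suc t}"
    by (rule finite_lists_length_eq) simp
qed

lemma partX:
  assumes "{\<omega>\<in>space P. Q \<omega>} \<in> sets P"
  shows "measure P {\<omega>\<in>space P. Q \<omega>} = (\<Sum>x\<in>UNIV. measure P {\<omega>\<in>space P. Q \<omega> \<and> X s \<omega> = x})"
proof -
  have "{\<omega>\<in>space P. Q \<omega>} = (\<Union>x\<in>UNIV. {\<omega>\<in>space P. Q \<omega> \<and> X s \<omega> = x})" by auto
  moreover have "measure P (\<Union>x\<in>UNIV. {\<omega>\<in>space P. Q \<omega> \<and> X s \<omega> = x})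
      = (\<Sum>x\<in>UNIV. measure P {\<omega>\<in>space P. Q \<omega> \<and> X s \<omega> = x})"
  proof (rule finite_measure_finite_Union)
    have "{\<omega>\<in>space P. Q \<omega> \<and> X s \<omega> = x} = {\<omega>\<in>space P. Q \<omega>} \<inter> {\<omega>\<in>space P. X s \<omega> = x}" for x
      by auto
    moreover have "{\<omega>\<in>space P. X s \<omega> = x} \<in> sets P" for x by measurable
    ultimately show "(\<lambda>x. {\<omega>\<in>space P. Q \<omega> \<and> X s \<omega> = x}) ` UNIV \<subseteq> sets P"
      using assms by auto
  qed (auto simp: disjoint_family_on_def)
  ultimately show ?thesis by simp
qed

lemma partPath:
  assumes "{\<omega>\<in>space P. Q \<omega>} \<in> sets P"
  shows "measure P {\<omega>\<in>space P. Q \<omega>} = (\<Sum>v\<in>PiE {..<u} (\<lambda>_. UNIV). measure P {\<omega>\<in>space P. Q \<omega> \<and> (\<forall>s<u. X s \<omega> = v s)})"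
proof -
  have "{\<omega>\<in>space P. Q \<omega>} = (\<Union>v\<in>PiE {..<u} (\<lambda>_. UNIV). {\<omega>\<in>space P. Q \<omega> \<and> (\<forall>s<u. X s \<omega> = v s)})"
  proof safe
    fix \<omega> assume om: "\<omega> \<in> space P" "Q \<omega>"
    show "\<omega> \<in> (\<Union>v\<in>PiE {..<u} (\<lambda>_. UNIV). {\<omega>\<in>space P. Q \<omega> \<and> (\<forall>s<u. X s \<omega> = v s)})"
    proof (rule UN_I[of "restrict (\<lambda>s. X s \<omega>) {..<u}"])
    qed (use om in auto)
  qed
  moreover have "measure P (\<Union>v\<in>PiE {..<u} (\<lambda>_. UNIV). {\<omega>\<in>space P. Q \<omega> \<and> (\<forall>s<u. X s \<omega> = v s)})
      = (\<Sum>v\<in>PiE {..<u} (\<lambda>_. UNIV). measure P {\<omega>\<in>space P. Q \<omega> \<and> (\<forall>s<u. X s \<omega> = v s)})"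
  proof (rule finite_measure_finite_Union)
    show "finite (PiE {..<u} (\<lambda>_. UNIV::'n set))" by (simp add: finite_PiE)
    have "{\<omega>\<in>space P. Q \<omega> \<and> (\<forall>s<u. X s \<omega> = v s)} = {\<omega>\<in>space P. Q \<omega>} \<inter> {\<omega>\<in>space P. \<forall>s<u. X s \<omega> = v s}" for v
      by auto
    moreover have "{\<omega>\<in>space P. \<forall>s<u. X s \<omega> = v s} \<in> sets P" for v by measurable
    ultimately show "(\<lambda>v. {\<omega>\<in>space P. Q \<omega> \<and> (\<forall>s<u. X s \<omega> = v s)}) ` PiE {..<u} (\<lambda>_. UNIV) \<subseteq> sets P"
      using assms by auto
    show "disjoint_family_on (\<lambda>v. {\<omega>\<in>space P. Q \<omega> \<and> (\<forall>s<u. X s \<omega> = v s)}) (PiE {..<u} (\<lambda>_. UNIV))"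
      unfolding disjoint_family_on_def
    proof safe
      fix v v' \<omega> assume "v \<in> PiE {..<u} (\<lambda>_. UNIV)" "v' \<in> PiE {..<u} (\<lambda>_. UNIV)" "v \<noteq> v'"
        "\<forall>s<u. X s \<omega> = v s" "\<forall>s<u. X s \<omega> = v' s"
      then show "\<omega> \<in> {}" using PiE_ext[of v "{..<u}" _ v'] by auto
    qed
  qed
  ultimately show ?thesis by simp
qed

end

context hmm begin

abbreviation F :: "nat \<Rightarrow> (nat \<Rightarrow> 'n) \<Rightarrow> (nat \<Rightarrow> 'o) \<Rightarrow> (nat \<Rightarrow> 'm) \<Rightarrow> real" where
  "F u w is ys \<equiv> p0 (w 0) * (\<Prod>s\<in>{1..u}. T $ w (s - 1) $ w s) * (\<Prod>s\<in>{0..u}. Mo (is s) $ w s $ ys s)"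

lemma F_Suc: "F (Suc u) w is ys = F u w is ys * T $ w u $ w (Suc u) * Mo (is (Suc u)) $ w (Suc u) $ ys (Suc u)"
  by (simp add: atLeastAtMostSuc_conv atLeast0_atMost_Suc mult_ac)

lemma F_cong: "(\<And>s. s \<le> u \<Longrightarrow> w s = w' s) \<Longrightarrow> F u w is ys = F u w' is ys"
proof -
  assume a: "\<And>s. s \<le> u \<Longrightarrow> w s = w' s"
  have "(\<Prod>s\<in>{1..u}. T $ w (s - 1) $ w s) = (\<Prod>s\<in>{1..u}. T $ w' (s - 1) $ w' s)"
    by (rule prod.cong) (auto simp: a)
  moreover have "(\<Prod>s\<in>{0..u}. Mo (is s) $ w s $ ys s) = (\<Prod>s\<in>{0..u}. Mo (is s) $ w' s $ ys s)"
    by (rule prod.cong) (auto simp: a)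
  ultimately show ?thesis using a[of 0] by simp
qed

lemma markov:
  "measure P {\<omega>\<in>space P. X (Suc u) \<omega> = x \<and> (\<forall>s\<le>Suc u. Y (is s) s \<omega> = ys s)}
   = (\<Sum>j\<in>UNIV. measure P {\<omega>\<in>space P. X u \<omega> = j \<and> (\<forall>s\<le>u. Y (is s) s \<omega> = ys s)}
        * T $ j $ x * Mo (is (Suc u)) $ x $ ys (Suc u))"
proof -
  let ?c = "Mo (is (Suc u)) $ x $ ys (Suc u)"
  let ?Pi = "PiE {..<u} (\<lambda>_. UNIV::'n set)"
  have A: "measure P {\<omega>\<in>space P. ((X (Suc u) \<omega> = x \<and> (\<forall>s\<le>Suc u. Y (is s) s \<omega> = ys s)) \<and> X u \<omega> = j) \<and> (\<forall>s<u. X s \<omega> = v s)}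
     = measure P {\<omega>\<in>space P. \<forall>s\<le>u. X s \<omega> = (v(u:=j)) s \<and> Y (is s) s \<omega> = ys s} * T $ j $ x * ?c" for j v
  proof -
    have "{\<omega>\<in>space P. ((X (Suc u) \<omega> = x \<and> (\<forall>s\<le>Suc u. Y (is s) s \<omega> = ys s)) \<and> X u \<omega> = j) \<and> (\<forall>s<u. X s \<omega> = v s)}
       = {\<omega>\<in>space P. \<forall>s\<le>Suc u. X s \<omega> = (v(u:=j, Suc u:=x)) s \<and> Y (is s) s \<omega> = ys s}"
      by (auto simp: all_le_Suc_split)
    then have "measure P {\<omega>\<in>space P. ((X (Suc u) \<omega> = x \<and> (\<forall>s\<le>Suc u. Y (is s) s \<omega> = ys s)) \<and> X u \<omega> = j) \<and> (\<forall>s<u. X s \<omega> = v s)}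
       = F (Suc u) (v(u:=j, Suc u:=x)) is ys" using joint by simp
    also have "\<dots> = F u (v(u:=j, Suc u:=x)) is ys * T $ j $ x * ?c"
      by (subst F_Suc) simp
    also have "F u (v(u:=j, Suc u:=x)) is ys = F u (v(u:=j)) is ys"
      by (rule F_cong) auto
    also have "F u (v(u:=j)) is ys = measure P {\<omega>\<in>space P. \<forall>s\<le>u. X s \<omega> = (v(u:=j)) s \<and> Y (is s) s \<omega> = ys s}"
      using joint by simp
    finally show ?thesis .
  qed
  have B: "measure P {\<omega>\<in>space P. X u \<omega> = j \<and> (\<forall>s\<le>u. Y (is s) s \<omega> = ys s)}
     = (\<Sum>v\<in>?Pi. measure P {\<omega>\<in>space P. \<forall>s\<le>u. X s \<omega> = (v(u:=j)) s \<and> Y (is s) s \<omega> = ys s})" for j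
  proof -
    have m: "{\<omega>\<in>space P. X u \<omega> = j \<and> (\<forall>s\<le>u. Y (is s) s \<omega> = ys s)} \<in> sets P" by measurable
    have "{\<omega>\<in>space P. (X u \<omega> = j \<and> (\<forall>s\<le>u. Y (is s) s \<omega> = ys s)) \<and> (\<forall>s<u. X s \<omega> = v s)}
       = {\<omega>\<in>space P. \<forall>s\<le>u. X s \<omega> = (v(u:=j)) s \<and> Y (is s) s \<omega> = ys s}" for v
      by (auto simp: all_le_split)
    then show ?thesis using partPath[OF m, of u] by simp
  qed
  have m1: "{\<omega>\<in>space P. X (Suc u) \<omega> = x \<and> (\<forall>s\<le>Suc u. Y (is s) s \<omega> = ys s)} \<in> sets P" by measurable
  have m2: "{\<omega>\<in>space P. (X (Suc u) \<omega> = x \<and> (\<forall>s\<le>Suc u. Y (is s) s \<omega> = ys s)) \<and> X u \<omega> = j} \<in> sets P" for j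
    by measurable
  have "measure P {\<omega>\<in>space P. X (Suc u) \<omega> = x \<and> (\<forall>s\<le>Suc u. Y (is s) s \<omega> = ys s)}
     = (\<Sum>j\<in>UNIV. measure P {\<omega>\<in>space P. (X (Suc u) \<omega> = x \<and> (\<forall>s\<le>Suc u. Y (is s) s \<omega> = ys s)) \<and> X u \<omega> = j})"
    by (rule partX[OF m1])
  also have "\<dots> = (\<Sum>j\<in>UNIV. \<Sum>v\<in>?Pi. measure P {\<omega>\<in>space P. ((X (Suc u) \<omega> = x \<and> (\<forall>s\<le>Suc u. Y (is s) s \<omega> = ys s)) \<and> X u \<omega> = j) \<and> (\<forall>s<u. X s \<omega> = v s)})"
    by (rule sum.cong[OF refl], rule partPath[OF m2])
  also have "\<dots> = (\<Sum>j\<in>UNIV. \<Sum>v\<in>?Pi. measure P {\<omega>\<in>space P. \<forall>s\<le>u. X s \<omega> = (v(u:=j)) s \<and> Y (is s) s \<omega> = ys s} * T $ j $ x * ?c)"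
    by (simp only: A)
  also have "\<dots> = (\<Sum>j\<in>UNIV. measure P {\<omega>\<in>space P. X u \<omega> = j \<and> (\<forall>s\<le>u. Y (is s) s \<omega> = ys s)} * T $ j $ x * ?c)"
    by (simp only: B sum_distrib_right)
  finally show ?thesis .
qed

end

context hmm begin

lemma rmap_nth: "rmap T Mo i y z $ x = (1 / (\<Sum>x\<in>UNIV. \<Sum>j\<in>UNIV. Mo i $ x $ y * T $ j $ x * z $ j)) * (\<Sum>j\<in>UNIV. Mo i $ x $ y * T $ j $ x * z $ j)"
proof -
  have "(\<Sum>x'\<in>UNIV. \<Sum>j\<in>UNIV. (Mo i $ x' $ y * T $ j $ x' * z $ j) *\<^sub>R axis x' (1::real)) $ x
       = (\<Sum>x'\<in>UNIV. (\<Sum>j\<in>UNIV. Mo i $ x' $ y * T $ j $ x' * z $ j) * (axis x' (1::real) $ x))"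
    by (simp add: sum_distrib_right)
  also have "\<dots> = (\<Sum>j\<in>UNIV. Mo i $ x $ y * T $ j $ x * z $ j)"
    by (simp add: axis_def if_distrib sum.delta cong: if_cong)
  finally show ?thesis by (simp add: rmap_def)
qed

lemma vmm_nth: "((z v* T) v* Mo i) $ y = (\<Sum>x\<in>UNIV. \<Sum>j\<in>UNIV. Mo i $ x $ y * T $ j $ x * z $ j)"
  by (simp add: vector_matrix_mult_def sum_distrib_left mult_ac)

lemma Hh:
  assumes "h \<in> Hset t" "\<omega> \<in> space P"
  shows "H t \<omega> = h \<longleftrightarrow> (\<forall>s\<le>t. Y (fst (h ! s)) s \<omega> = snd (h ! s))"
proof -
  obtain \<omega>0 where "h = H t \<omega>0" using assms(1) by (auto simp: Hset_def)
  then have "{\<omega>\<in>space P. H t \<omega> = h} = {\<omega>\<in>space P. \<forall>s\<le>t. Y (fst (h ! s)) s \<omega> = snd (h ! s)}"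
    using Ev_eq[of t \<omega>0] by simp
  then have "\<omega> \<in> {\<omega>\<in>space P. H t \<omega> = h} \<longleftrightarrow> \<omega> \<in> {\<omega>\<in>space P. \<forall>s\<le>t. Y (fst (h ! s)) s \<omega> = snd (h ! s)}"
    by simp
  then show ?thesis using assms(2) by simp
qed

lemma filt:
  assumes h: "h \<in> Hset t"
  shows "measure P {\<omega>\<in>space P. X (Suc t) \<omega> = x \<and> H t \<omega> = h \<and> Y i (Suc t) \<omega> = y}
       = (\<Sum>j\<in>UNIV. measure P {\<omega>\<in>space P. X t \<omega> = j \<and> H t \<omega> = h} * T $ j $ x * Mo i $ x $ y)"
proof -
  define "is" where "is s = (if s \<le> t then fst (h ! s) else i)" for s
  define ys where "ys s = (if s \<le> t then snd (h ! s) else y)" for s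
  have e1: "H t \<omega> = h \<longleftrightarrow> (\<forall>s\<le>t. Y (is s) s \<omega> = ys s)" if "\<omega> \<in> space P" for \<omega>
    using Hh[OF h that] by (simp add: is_def ys_def)
  have e2: "(H t \<omega> = h \<and> Y i (Suc t) \<omega> = y) \<longleftrightarrow> (\<forall>s\<le>Suc t. Y (is s) s \<omega> = ys s)" if "\<omega> \<in> space P" for \<omega>
    using e1[OF that] by (auto simp: le_Suc_eq is_def ys_def)
  have A: "{\<omega>\<in>space P. X (Suc t) \<omega> = x \<and> H t \<omega> = h \<and> Y i (Suc t) \<omega> = y}
      = {\<omega>\<in>space P. X (Suc t) \<omega> = x \<and> (\<forall>s\<le>Suc t. Y (is s) s \<omega> = ys s)}"
    using e2 by auto
  have B: "{\<omega>\<in>space P. X t \<omega> = j \<and> H t \<omega> = h}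
      = {\<omega>\<in>space P. X t \<omega> = j \<and> (\<forall>s\<le>t. Y (is s) s \<omega> = ys s)}" for j
    using e1 by auto
  have C: "is (Suc t) = i" "ys (Suc t) = y" by (simp_all add: is_def ys_def)
  show ?thesis
    unfolding A B using markov[of t x "is" ys] unfolding C .
qed

lemma sumX_t: "measure P {\<omega>\<in>space P. H t \<omega> = h} = (\<Sum>j\<in>UNIV. measure P {\<omega>\<in>space P. X t \<omega> = j \<and> H t \<omega> = h})"
proof -
  have m: "{\<omega>\<in>space P. H t \<omega> = h} \<in> sets P" by measurable
  show ?thesis using partX[OF m, of t] by (simp add: conj_commute)
qed

lemma sumX_Suc: "measure P {\<omega>\<in>space P. H t \<omega> = h \<and> Y i (Suc t) \<omega> = y}
   = (\<Sum>x\<in>UNIV. measure P {\<omega>\<in>space P. X (Suc t) \<omega> = x \<and> H t \<omega> = h \<and> Y i (Suc t) \<omega> = y})"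
proof -
  have m: "{\<omega>\<in>space P. H t \<omega> = h \<and> Y i (Suc t) \<omega> = y} \<in> sets P" by measurable
  show ?thesis using partX[OF m, of "Suc t"] by (simp add: conj_commute conj_left_commute)
qed

lemma cz_PS:
  assumes "measure P {\<omega>\<in>space P. H t \<omega> = h} \<noteq> 0"
  shows "cz t h \<in> PS"
  using assms sumX_t[of t h]
  by (auto simp: PS_def cz_def sum_divide_distrib[symmetric] intro!: divide_nonneg_nonneg sum_nonneg)

lemma q_eq:
  assumes h: "h \<in> Hset t" and p: "measure P {\<omega>\<in>space P. H t \<omega> = h} \<noteq> 0"
  shows "measure P {\<omega>\<in>space P. H t \<omega> = h \<and> Y i (Suc t) \<omega> = y}
       = measure P {\<omega>\<in>space P. H t \<omega> = h} * ((cz t h v* T) v* Mo i) $ y"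
proof -
  let ?p = "measure P {\<omega>\<in>space P. H t \<omega> = h}"
  let ?m = "\<lambda>j. measure P {\<omega>\<in>space P. X t \<omega> = j \<and> H t \<omega> = h}"
  have "((cz t h v* T) v* Mo i) $ y = (\<Sum>x\<in>UNIV. \<Sum>j\<in>UNIV. Mo i $ x $ y * T $ j $ x * (?m j / ?p))"
    by (simp add: vmm_nth cz_def)
  also have "\<dots> = (\<Sum>x\<in>UNIV. \<Sum>j\<in>UNIV. ?m j * T $ j $ x * Mo i $ x $ y) / ?p"
    by (simp add: sum_divide_distrib mult_ac)
  also have "\<dots> = measure P {\<omega>\<in>space P. H t \<omega> = h \<and> Y i (Suc t) \<omega> = y} / ?p"
    by (simp add: sumX_Suc filt[OF h])
  finally show ?thesis using p by simp
qed

lemma cz_next: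
  assumes h: "h \<in> Hset t" and p: "measure P {\<omega>\<in>space P. H t \<omega> = h} \<noteq> 0"
    and i: "i = g (cz t h)"
    and q: "measure P {\<omega>\<in>space P. H t \<omega> = h \<and> Y i (Suc t) \<omega> = y} \<noteq> 0"
  shows "cz (Suc t) (h @ [(i, y)]) = rmap T Mo i y (cz t h)"
proof -
  let ?p = "measure P {\<omega>\<in>space P. H t \<omega> = h}"
  let ?q = "measure P {\<omega>\<in>space P. H t \<omega> = h \<and> Y i (Suc t) \<omega> = y}"
  let ?m = "\<lambda>j. measure P {\<omega>\<in>space P. X t \<omega> = j \<and> H t \<omega> = h}"
  let ?n = "\<lambda>x. measure P {\<omega>\<in>space P. X (Suc t) \<omega> = x \<and> H t \<omega> = h \<and> Y i (Suc t) \<omega> = y}"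
  have eq: "H (Suc t) \<omega> = h @ [(i, y)] \<longleftrightarrow> H t \<omega> = h \<and> Y i (Suc t) \<omega> = y" for \<omega>
    by (auto simp add: hist_Suc hist_len i simp del: hist.simps)
  have D: "(\<Sum>x\<in>UNIV. \<Sum>j\<in>UNIV. Mo i $ x $ y * T $ j $ x * cz t h $ j) = ?q / ?p"
    using q_eq[OF h p, of i y] p by (simp add: vmm_nth)
  have N: "(\<Sum>j\<in>UNIV. Mo i $ x $ y * T $ j $ x * cz t h $ j) = ?n x / ?p" for x
    by (simp add: cz_def filt[OF h] sum_divide_distrib mult_ac)
  show ?thesis
    unfolding vec_eq_iff
  proof
    fix x
    have "cz (Suc t) (h @ [(i, y)]) $ x = ?n x / ?q"
      by (simp add: cz_def eq conj_commute conj_left_commute del: hist.simps)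
    also have "\<dots> = (1 / (?q / ?p)) * (?n x / ?p)"
      using p q by (simp add: field_simps)
    also have "\<dots> = rmap T Mo i y (cz t h) $ x"
      by (simp only: rmap_nth, simp only: D, simp only: N)
    finally show "cz (Suc t) (h @ [(i, y)]) $ x = rmap T Mo i y (cz t h) $ x" .
  qed
qed

end

context hmm begin

lemma disc_int:
  assumes L: "finite L" and V: "\<And>\<omega>. \<omega> \<in> space P \<Longrightarrow> V \<omega> \<in> L"
    and Vm: "\<And>v. {\<omega>\<in>space P. V \<omega> = v} \<in> sets P"
  shows "(\<integral>\<^sup>+\<omega>. G (V \<omega>) \<partial>P) = (\<Sum>v\<in>L. G v * emeasure P {\<omega>\<in>space P. V \<omega> = v})"
proof -
  have "(\<integral>\<^sup>+\<omega>. G (V \<omega>) \<partial>P) = (\<integral>\<^sup>+\<omega>. (\<Sum>v\<in>L. G v * indicator {\<omega>\<in>space P. V \<omega> = v} \<omega>) \<partial>P)"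
  proof (rule nn_integral_cong)
    fix \<omega> assume "\<omega> \<in> space P"
    then have "(\<Sum>v\<in>L. G v * indicator {\<omega>\<in>space P. V \<omega> = v} \<omega>) = (\<Sum>v\<in>L. if v = V \<omega> then G v else 0)"
      by (intro sum.cong) (auto simp: indicator_def)
    also have "\<dots> = G (V \<omega>)" using V[OF \<open>\<omega> \<in> space P\<close>] L by (simp add: sum.delta')
    finally show "G (V \<omega>) = (\<Sum>v\<in>L. G v * indicator {\<omega>\<in>space P. V \<omega> = v} \<omega>)" by simp
  qed
  also have "\<dots> = (\<Sum>v\<in>L. \<integral>\<^sup>+\<omega>. G v * indicator {\<omega>\<in>space P. V \<omega> = v} \<omega> \<partial>P)"
    by (rule nn_integral_sum) (use Vm in auto)
  also have "\<dots> = (\<Sum>v\<in>L. G v * emeasure P {\<omega>\<in>space P. V \<omega> = v})"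
    by (intro sum.cong refl nn_integral_cmult_indicator Vm)
  finally show ?thesis .
qed

lemma Ai_sets:
  assumes gm: "g \<in> restrict_space borel PS \<rightarrow>\<^sub>M count_space UNIV"
  shows "{z\<in>PS. g z = i} \<in> sets borel"
proof -
  have PSb: "PS \<in> sets (borel :: (real^'n) measure)" unfolding PS_def by measurable
  have "g -` {i} \<inter> space (restrict_space borel PS) \<in> sets (restrict_space borel PS)"
    by (rule measurable_sets[OF gm]) simp
  moreover have "g -` {i} \<inter> space (restrict_space borel PS) = {z\<in>PS. g z = i}"
    by (auto simp: space_restrict_space)
  ultimately show ?thesis using sets_restrict_space_iff[of PS borel] PSb by auto
qed

lemma integrand_meas:
  assumes gm: "g \<in> restrict_space borel PS \<rightarrow>\<^sub>M count_space UNIV" and B: "B \<in> sets borel"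
  shows "(\<lambda>z. ennreal (((z v* T) v* Mo i) $ y) * indicator B (rmap T Mo i y z) * indicator {z\<in>PS. g z = i} z)
     \<in> borel_measurable borel"
proof -
  have e: "(\<lambda>z. ((z v* T) v* Mo i) $ y) = (\<lambda>z. \<Sum>x\<in>UNIV. \<Sum>j\<in>UNIV. Mo i $ x $ y * T $ j $ x * z $ j)"
    by (simp add: vmm_nth)
  have m1: "(\<lambda>z::real^'n. ((z v* T) v* Mo i) $ y) \<in> borel_measurable borel"
    unfolding e by measurable
  have m2: "rmap T Mo i y \<in> borel_measurable borel" unfolding rmap_def by measurable
  show ?thesis
  proof (intro borel_measurable_times_ennreal)
    show "(\<lambda>z. ennreal (((z v* T) v* Mo i) $ y)) \<in> borel_measurable borel"
      by (rule measurable_compose[OF m1 measurable_ennreal])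
    show "(\<lambda>z. indicator B (rmap T Mo i y z) :: ennreal) \<in> borel_measurable borel"
      by (rule measurable_compose[OF m2 borel_measurable_indicator[OF B]])
    show "(\<lambda>z. indicator {z\<in>PS. g z = i} z :: ennreal) \<in> borel_measurable borel"
      by (rule borel_measurable_indicator[OF Ai_sets[OF gm]])
  qed
qed

end

context hmm begin

lemma term_eq:
  assumes h: "h \<in> Hset t"
  shows "indicator B (cz (Suc t) (h @ [(g (cz t h), y)]))
           * emeasure P {\<omega>\<in>space P. H t \<omega> = h \<and> Y (g (cz t h)) (Suc t) \<omega> = y}
       = (\<Sum>i\<in>UNIV. (ennreal (((cz t h v* T) v* Mo i) $ y) * indicator B (rmap T Mo i y (cz t h))
              * indicator {z\<in>PS. g z = i} (cz t h)) * emeasure P {\<omega>\<in>space P. H t \<omega> = h})"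
proof -
  define z where "z = cz t h"
  define i where "i = g z"
  let ?p = "measure P {\<omega>\<in>space P. H t \<omega> = h}"
  let ?q = "measure P {\<omega>\<in>space P. H t \<omega> = h \<and> Y i (Suc t) \<omega> = y}"
  have Si: "(\<Sum>i'\<in>UNIV. (ennreal (((z v* T) v* Mo i') $ y) * indicator B (rmap T Mo i' y z)
              * indicator {z\<in>PS. g z = i'} z) * emeasure P {\<omega>\<in>space P. H t \<omega> = h})
      = (if z \<in> PS then ennreal (((z v* T) v* Mo i) $ y) * indicator B (rmap T Mo i y z) * ennreal ?p else 0)"
  proof -
    have "(ennreal (((z v* T) v* Mo i') $ y) * indicator B (rmap T Mo i' y z)
              * indicator {z\<in>PS. g z = i'} z) * emeasure P {\<omega>\<in>space P. H t \<omega> = h}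
        = (if i' = i then (if z \<in> PS then ennreal (((z v* T) v* Mo i') $ y) * indicator B (rmap T Mo i' y z) * ennreal ?p else 0) else 0)" for i'
      by (auto simp: indicator_def i_def emeasure_eq_measure)
    then show ?thesis by (simp add: sum.delta)
  qed
  have E1: "emeasure P {\<omega>\<in>space P. H t \<omega> = h \<and> Y i (Suc t) \<omega> = y} = ennreal ?q"
    by (simp add: emeasure_eq_measure)
  show ?thesis
    unfolding z_def[symmetric] i_def[symmetric] Si E1
  proof (cases "?p = 0")
    case True
    have "?q \<le> ?p"
      by (rule finite_measure_mono) (auto intro: Ev_sets)
    then have "?q = 0" using True measure_nonneg[of P] by (metis antisym)
    then show "indicator B (cz (Suc t) (h @ [(i, y)])) * ennreal ?q
        = (if z \<in> PS then ennreal (((z v* T) v* Mo i) $ y) * indicator B (rmap T Mo i y z) * ennreal ?p else 0)"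
      using True by simp
  next
    case False
    have zPS: "z \<in> PS" unfolding z_def by (rule cz_PS[OF False])
    have qe: "?q = ?p * ((z v* T) v* Mo i) $ y" unfolding z_def by (rule q_eq[OF h False])
    have p0: "?p > 0" using False measure_nonneg[of P "{\<omega>\<in>space P. H t \<omega> = h}"] by linarith
    have d: "((z v* T) v* Mo i) $ y = ?q / ?p" using qe False by simp
    have dnn: "((z v* T) v* Mo i) $ y \<ge> 0" unfolding d using p0 by simp
    show "indicator B (cz (Suc t) (h @ [(i, y)])) * ennreal ?q
        = (if z \<in> PS then ennreal (((z v* T) v* Mo i) $ y) * indicator B (rmap T Mo i y z) * ennreal ?p else 0)"
    proof (cases "?q = 0")
      case True
      then have "((z v* T) v* Mo i) $ y = 0" using d by simp
      then show ?thesis using True zPS by simp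
    next
      case q: False
      have cn: "cz (Suc t) (h @ [(i, y)]) = rmap T Mo i y z"
        unfolding z_def by (rule cz_next[OF h False]) (use q i_def z_def in auto)
      have "ennreal (((z v* T) v* Mo i) $ y) * ennreal ?p = ennreal ?q"
        using qe dnn by (simp add: ennreal_mult[symmetric] mult.commute)
      then show ?thesis using zPS cn by (simp add: mult_ac)
    qed
  qed
qed

end

context hmm begin

lemma main:
  assumes gm: "g \<in> restrict_space borel PS \<rightarrow>\<^sub>M count_space UNIV" and B: "B \<in> sets borel"
  shows "emeasure (infolaw P X Y g i0 (Suc t)) B
       = (\<Sum>i\<in>UNIV. \<Sum>y\<in>UNIV.
              \<integral>\<^sup>+ z\<in>{z\<in>PS. g z = i}.
                 ennreal (((z v* T) v* Mo i) $ y) * indicator B (rmap T Mo i y z)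
              \<partial>(infolaw P X Y g i0 t))"
proof -
  define f where "f i y z = ennreal (((z v* T) v* Mo i) $ y) * indicator B (rmap T Mo i y z) * indicator {z\<in>PS. g z = i} z" for i y z
  define G where "G = (\<lambda>(h, y). indicator B (cz (Suc t) (h @ [(g (cz t h), y)])) :: ennreal)"
  have HsetI: "\<And>\<omega>. \<omega> \<in> space P \<Longrightarrow> H t \<omega> \<in> Hset t" by (simp add: Hset_def)
  have L: "emeasure (infolaw P X Y g i0 (Suc t)) B
      = (\<Sum>h\<in>Hset t. \<Sum>y\<in>UNIV. indicator B (cz (Suc t) (h @ [(g (cz t h), y)]))
           * emeasure P {\<omega>\<in>space P. H t \<omega> = h \<and> Y (g (cz t h)) (Suc t) \<omega> = y})"
  proof -
    have "emeasure (infolaw P X Y g i0 (Suc t)) B = (\<integral>\<^sup>+z. indicator B z \<partial>(infolaw P X Y g i0 (Suc t)))"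
      using B by (simp add: infolaw_def)
    also have "\<dots> = (\<integral>\<^sup>+\<omega>. indicator B (cz (Suc t) (H (Suc t) \<omega>)) \<partial>P)"
      unfolding infolaw_def infoZ_eq
      by (rule nn_integral_distr) (use B Zm[of "Suc t"] in \<open>auto simp del: hist.simps\<close>)
    also have "\<dots> = (\<integral>\<^sup>+\<omega>. G (H t \<omega>, Y (g (cz t (H t \<omega>))) (Suc t) \<omega>) \<partial>P)"
      by (simp add: hist_Suc G_def del: hist.simps)
    also have "\<dots> = (\<Sum>v\<in>Hset t \<times> UNIV. G v * emeasure P {\<omega>\<in>space P. (H t \<omega>, Y (g (cz t (H t \<omega>))) (Suc t) \<omega>) = v})"
    proof (rule disc_int)
      show "finite (Hset t \<times> (UNIV :: 'm set))" using Hset_finite by simp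
      show "\<And>\<omega>. \<omega> \<in> space P \<Longrightarrow> (H t \<omega>, Y (g (cz t (H t \<omega>))) (Suc t) \<omega>) \<in> Hset t \<times> UNIV"
        using HsetI by simp
      fix v :: "('o \<times> 'm) list \<times> 'm"
      obtain h y where v: "v = (h, y)" by (cases v)
      have "{\<omega>\<in>space P. (H t \<omega>, Y (g (cz t (H t \<omega>))) (Suc t) \<omega>) = v}
          = {\<omega>\<in>space P. H t \<omega> = h \<and> Y (g (cz t h)) (Suc t) \<omega> = y}"
        using v by auto
      also have "\<dots> \<in> sets P" by measurable
      finally show "{\<omega>\<in>space P. (H t \<omega>, Y (g (cz t (H t \<omega>))) (Suc t) \<omega>) = v} \<in> sets P" .
    qed
    also have "\<dots> = (\<Sum>h\<in>Hset t. \<Sum>y\<in>UNIV. G (h, y) * emeasure P {\<omega>\<in>space P. (H t \<omega>, Y (g (cz t (H t \<omega>))) (Suc t) \<omega>) = (h, y)})"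
      unfolding sum.cartesian_product by (rule sum.cong) (auto split: prod.splits)
    also have "\<dots> = (\<Sum>h\<in>Hset t. \<Sum>y\<in>UNIV. indicator B (cz (Suc t) (h @ [(g (cz t h), y)]))
           * emeasure P {\<omega>\<in>space P. H t \<omega> = h \<and> Y (g (cz t h)) (Suc t) \<omega> = y})"
    proof (intro sum.cong refl)
      fix h y
      have "{\<omega>\<in>space P. (H t \<omega>, Y (g (cz t (H t \<omega>))) (Suc t) \<omega>) = (h, y)}
          = {\<omega>\<in>space P. H t \<omega> = h \<and> Y (g (cz t h)) (Suc t) \<omega> = y}" by auto
      then show "G (h, y) * emeasure P {\<omega>\<in>space P. (H t \<omega>, Y (g (cz t (H t \<omega>))) (Suc t) \<omega>) = (h, y)}
          = indicator B (cz (Suc t) (h @ [(g (cz t h), y)])) * emeasure P {\<omega>\<in>space P. H t \<omega> = h \<and> Y (g (cz t h)) (Suc t) \<omega> = y}"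
        by (simp add: G_def)
    qed
    finally show ?thesis .
  qed
  have R1: "(\<integral>\<^sup>+ z\<in>{z\<in>PS. g z = i}. ennreal (((z v* T) v* Mo i) $ y) * indicator B (rmap T Mo i y z) \<partial>(infolaw P X Y g i0 t))
      = (\<Sum>h\<in>Hset t. f i y (cz t h) * emeasure P {\<omega>\<in>space P. H t \<omega> = h})" for i y
  proof -
    have "(\<integral>\<^sup>+ z\<in>{z\<in>PS. g z = i}. ennreal (((z v* T) v* Mo i) $ y) * indicator B (rmap T Mo i y z) \<partial>(infolaw P X Y g i0 t))
        = (\<integral>\<^sup>+ z. f i y z \<partial>(distr P borel (\<lambda>\<omega>. cz t (H t \<omega>))))"
      by (simp add: f_def infolaw_def infoZ_eq)
    also have "\<dots> = (\<integral>\<^sup>+\<omega>. f i y (cz t (H t \<omega>)) \<partial>P)"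
      by (rule nn_integral_distr) (use Zm integrand_meas[OF gm B] in \<open>auto simp: f_def\<close>)
    also have "\<dots> = (\<Sum>h\<in>Hset t. f i y (cz t h) * emeasure P {\<omega>\<in>space P. H t \<omega> = h})"
      by (rule disc_int[OF Hset_finite HsetI Ev_sets])
    finally show ?thesis .
  qed
  have "(\<Sum>i\<in>UNIV. \<Sum>y\<in>UNIV. \<Sum>h\<in>Hset t. f i y (cz t h) * emeasure P {\<omega>\<in>space P. H t \<omega> = h})
      = (\<Sum>i\<in>UNIV. \<Sum>h\<in>Hset t. \<Sum>y\<in>UNIV. f i y (cz t h) * emeasure P {\<omega>\<in>space P. H t \<omega> = h})"
    by (intro sum.cong refl sum.swap)
  also have "\<dots> = (\<Sum>h\<in>Hset t. \<Sum>i\<in>UNIV. \<Sum>y\<in>UNIV. f i y (cz t h) * emeasure P {\<omega>\<in>space P. H t \<omega> = h})"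
    by (rule sum.swap)
  also have "\<dots> = (\<Sum>h\<in>Hset t. \<Sum>y\<in>UNIV. \<Sum>i\<in>UNIV. f i y (cz t h) * emeasure P {\<omega>\<in>space P. H t \<omega> = h})"
    by (intro sum.cong refl sum.swap)
  also have "\<dots> = (\<Sum>h\<in>Hset t. \<Sum>y\<in>UNIV. indicator B (cz (Suc t) (h @ [(g (cz t h), y)]))
           * emeasure P {\<omega>\<in>space P. H t \<omega> = h \<and> Y (g (cz t h)) (Suc t) \<omega> = y})"
    by (intro sum.cong refl) (simp add: f_def term_eq)
  finally show ?thesis using L R1 by simp
qed

end

theorem lemma2p13:
  fixes P :: "'a measure"
    and X :: "nat \<Rightarrow> 'a \<Rightarrow> 'n::finite"
    and Y :: "'o::finite \<Rightarrow> nat \<Rightarrow> 'a \<Rightarrow> 'm::finite"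
    and T :: "real^'n^'n"
    and Mo :: "'o \<Rightarrow> real^'m^'n"
    and p0 :: "'n \<Rightarrow> real"
    and g :: "real^'n \<Rightarrow> 'o"
    and i0 :: 'o
    and t :: nat
  assumes "prob_space P"
    and "\<And>s. X s \<in> P \<rightarrow>\<^sub>M count_space UNIV"
    and "\<And>i s. Y i s \<in> P \<rightarrow>\<^sub>M count_space UNIV"
    and "\<And>j x. 0 \<le> T $ j $ x"
    and "\<And>j. (\<Sum>x\<in>UNIV. T $ j $ x) = 1"
    and "\<And>i x y. 0 \<le> Mo i $ x $ y"
    and "\<And>i x. (\<Sum>y\<in>UNIV. Mo i $ x $ y) = 1"
    and "\<And>u (xs :: nat \<Rightarrow> 'n) (is :: nat \<Rightarrow> 'o) (ys :: nat \<Rightarrow> 'm).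
           measure P {\<omega>\<in>space P. \<forall>s\<le>u. X s \<omega> = xs s \<and> Y (is s) s \<omega> = ys s}
         = p0 (xs 0) * (\<Prod>s\<in>{1..u}. T $ xs (s - 1) $ xs s)
             * (\<Prod>s\<in>{0..u}. Mo (is s) $ xs s $ ys s)"
    and "g \<in> restrict_space borel PS \<rightarrow>\<^sub>M count_space UNIV"
  shows "\<forall>B\<in>sets borel.
           emeasure (infolaw P X Y g i0 (Suc t)) B
         = (\<Sum>i\<in>UNIV. \<Sum>y\<in>UNIV.
              \<integral>\<^sup>+ z\<in>{z\<in>PS. g z = i}.
                 ennreal (((z v* T) v* Mo i) $ y) * indicator B (rmap T Mo i y z)
              \<partial>(infolaw P X Y g i0 t))"
  proof -
  interpret hmm P X Y T Mo p0 g i0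
    by (rule hmm.intro[OF assms(1) assms(2) assms(3) assms(8)])
  show ?thesis using main[OF assms(9)] by blast
qed

end
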